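(* Let $r\ge1$ and let $(\lambda_{i,j})_{1\le i,j\le r}$ be a complex $r\times r$ table. Let $V$ be the space of functions $\{1,\dots,r\}\to\mathbb{C}$, equipped with some inner product $\langle\cdot,\cdot\rangle$. Define $\lambda_i\in V$ by $\lambda_i(j)=\lambda_{i,j}$, let $V$ carry the pointwise product $(fg)(j)=f(j)g(j)$, and for $f\in V$ let $M_f:V\to V$, $g\mapsto fg$, and $M_i:=M_{\lambda_i}$. Assume that: (i) $\langle\lambda_i,\lambda_j\rangle=\delta_{i,j}$ for all $i,j$; (ii) for every $i$ there is $j$ (automatically unique, denoted $i^*$) such that the adjoint of $M_i$ with respect to $\langle\cdot,\cdot\rangle$ equals $M_j$; (iii) $M_1$ is the identity; (iv) $N_{i,j}^k:=\langle\lambda_i\lambda_j,\lambda_k\rangle$ is a nonnegative integer for all $i,j,k$. Then $(N_{i,j}^k)$ are the structure constants of a commutative fusion ring with basis $b_1,\dots,b_r$ (unit $b_1$, duality $i\mapsto i^*$), and $(\lambda_{i,j})$ is its eigentable. Conversely, every eigentable of a commutative fusion ring satisfies all the assumptions (i)–(iv) for a suitable inner product on $V$.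
   Context: A fusion ring of rank $r$ is a ring which is a free $\mathbb{Z}$-module with basis $\{b_1,\dots,b_r\}$, multiplication $b_ib_j=\sum_k N_{i,j}^k b_k$ with $N_{i,j}^k\in\mathbb{Z}_{\ge0}$, associative, with $b_1$ a two-sided unit, such that for every $i$ there is a unique $i^*$ with $N_{i,k}^1=N_{k,i}^1=\delta_{i^*,k}$ for all $k$, and satisfying Frobenius reciprocity $N_{i,j}^k=N_{i^*,k}^j=N_{k,j^*}^i$. Its fusion matrices are $M_i=(N_{i,j}^k)_{k,j}$. If the ring is commutative, these matrices are pairwise commuting and normal, hence simultaneously diagonalizable: writing the simultaneous diagonalizations as $\mathrm{diag}(\lambda_{i,1},\dots,\lambda_{i,r})$, the table $(\lambda_{i,j})$ (row $i$ indexed by the basis element $b_i$, column $j$ by the $j$-th common eigenvector) is called the eigentable of the commutative fusion ring. *)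

theory Defs
  imports Complex_Main
begin

text \<open>Indices run over {1..r}. The space V of functions {1..r} -> complex is represented
  by functions nat => complex that vanish outside {1..r}.\<close>

definition Vsp :: "nat \<Rightarrow> (nat \<Rightarrow> complex) set" where
  "Vsp r = {f. \<forall>j. j \<notin> {1..r} \<longrightarrow> f j = 0}"

definition row_vec :: "nat \<Rightarrow> (nat \<Rightarrow> nat \<Rightarrow> complex) \<Rightarrow> nat \<Rightarrow> (nat \<Rightarrow> complex)" where
  "row_vec r lam i = (\<lambda>j. if j \<in> {1..r} then lam i j else 0)"

definition pmult :: "(nat \<Rightarrow> complex) \<Rightarrow> (nat \<Rightarrow> complex) \<Rightarrow> (nat \<Rightarrow> complex)" where
  "pmult f g = (\<lambda>j. f j * g j)"

definition is_inner_product :: "nat \<Rightarrow> ((nat \<Rightarrow> complex) \<Rightarrow> (nat \<Rightarrow> complex) \<Rightarrow> complex) \<Rightarrow> bool" where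
  "is_inner_product r ip \<longleftrightarrow>
     (\<forall>f\<in>Vsp r. \<forall>g\<in>Vsp r. \<forall>h\<in>Vsp r. ip (\<lambda>j. f j + g j) h = ip f h + ip g h) \<and>
     (\<forall>c. \<forall>f\<in>Vsp r. \<forall>g\<in>Vsp r. ip (\<lambda>j. c * f j) g = c * ip f g) \<and>
     (\<forall>f\<in>Vsp r. \<forall>g\<in>Vsp r. ip g f = cnj (ip f g)) \<and>
     (\<forall>f\<in>Vsp r. f \<noteq> (\<lambda>_. 0) \<longrightarrow> Im (ip f f) = 0 \<and> Re (ip f f) > 0)"

definition adjoint_mult :: "nat \<Rightarrow> ((nat \<Rightarrow> complex) \<Rightarrow> (nat \<Rightarrow> complex) \<Rightarrow> complex)
     \<Rightarrow> (nat \<Rightarrow> complex) \<Rightarrow> (nat \<Rightarrow> complex) \<Rightarrow> bool" where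
  "adjoint_mult r ip f h \<longleftrightarrow>
     (\<forall>g\<in>Vsp r. \<forall>k\<in>Vsp r. ip (pmult f g) k = ip g (pmult h k))"

definition eigen_conditions :: "nat \<Rightarrow> (nat \<Rightarrow> nat \<Rightarrow> complex)
     \<Rightarrow> ((nat \<Rightarrow> complex) \<Rightarrow> (nat \<Rightarrow> complex) \<Rightarrow> complex) \<Rightarrow> bool" where
  "eigen_conditions r lam ip \<longleftrightarrow>
     (\<forall>i\<in>{1..r}. \<forall>j\<in>{1..r}. ip (row_vec r lam i) (row_vec r lam j) = (if i = j then 1 else 0)) \<and>
     (\<forall>i\<in>{1..r}. \<exists>j\<in>{1..r}. adjoint_mult r ip (row_vec r lam i) (row_vec r lam j)) \<and>
     (\<forall>g\<in>Vsp r. pmult (row_vec r lam 1) g = g) \<and>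
     (\<forall>i\<in>{1..r}. \<forall>j\<in>{1..r}. \<forall>k\<in>{1..r}. \<exists>n::nat.
        ip (pmult (row_vec r lam i) (row_vec r lam j)) (row_vec r lam k) = of_nat n)"

text \<open>Fusion ring of rank r with basis b_1..b_r, structure constants N i j k = N_{i,j}^k,
  unit b_1 and duality d (i* = d i).\<close>
definition fusion_ring :: "nat \<Rightarrow> (nat \<Rightarrow> nat \<Rightarrow> nat \<Rightarrow> nat) \<Rightarrow> (nat \<Rightarrow> nat) \<Rightarrow> bool" where
  "fusion_ring r N d \<longleftrightarrow>
     r \<ge> 1 \<and>
     (\<forall>i\<in>{1..r}. \<forall>j\<in>{1..r}. \<forall>k\<in>{1..r}. \<forall>l\<in>{1..r}.
        (\<Sum>m\<in>{1..r}. N i j m * N m k l) = (\<Sum>m\<in>{1..r}. N j k m * N i m l)) \<and>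
     (\<forall>j\<in>{1..r}. \<forall>k\<in>{1..r}. N 1 j k = (if j = k then 1 else 0) \<and> N j 1 k = (if j = k then 1 else 0)) \<and>
     (\<forall>i\<in>{1..r}. d i \<in> {1..r} \<and>
        (\<forall>k\<in>{1..r}. N i k 1 = (if k = d i then 1 else 0) \<and> N k i 1 = (if k = d i then 1 else 0))) \<and>
     (\<forall>i\<in>{1..r}. \<forall>j\<in>{1..r}. \<forall>k\<in>{1..r}. N i j k = N (d i) k j \<and> N i j k = N k (d j) i)"

definition comm_fusion_ring :: "nat \<Rightarrow> (nat \<Rightarrow> nat \<Rightarrow> nat \<Rightarrow> nat) \<Rightarrow> (nat \<Rightarrow> nat) \<Rightarrow> bool" where
  "comm_fusion_ring r N d \<longleftrightarrow> fusion_ring r N d \<and>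
     (\<forall>i\<in>{1..r}. \<forall>j\<in>{1..r}. \<forall>k\<in>{1..r}. N i j k = N j i k)"

text \<open>lam is an eigentable: there is an invertible r x r matrix P (inverse Q) whose
  j-th column is a common eigenvector of all fusion matrices M_i = (N i j k)_{k,j}
  with eigenvalue lam i j.\<close>
definition eigentable :: "nat \<Rightarrow> (nat \<Rightarrow> nat \<Rightarrow> nat \<Rightarrow> nat) \<Rightarrow> (nat \<Rightarrow> nat \<Rightarrow> complex) \<Rightarrow> bool" where
  "eigentable r N lam \<longleftrightarrow>
     (\<exists>P Q :: nat \<Rightarrow> nat \<Rightarrow> complex.
        (\<forall>k\<in>{1..r}. \<forall>m\<in>{1..r}. (\<Sum>l\<in>{1..r}. P k l * Q l m) = (if k = m then 1 else 0)) \<and>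
        (\<forall>k\<in>{1..r}. \<forall>m\<in>{1..r}. (\<Sum>l\<in>{1..r}. Q k l * P l m) = (if k = m then 1 else 0)) \<and>
        (\<forall>i\<in>{1..r}. \<forall>j\<in>{1..r}. \<forall>k\<in>{1..r}.
           (\<Sum>l\<in>{1..r}. of_nat (N i l k) * P l j) = lam i j * P k j))"

end

theory Submission
  imports Defs "Jordan_Normal_Form.Determinant"
begin


lemma sum_shift1: "(\<Sum>l\<in>{1..r}. f l) = (\<Sum>l\<in>{0..<r}. f (Suc l :: nat))"
proof -
  have e: "{1..r} = Suc ` {0..<r}" by (auto simp: image_iff)
  show ?thesis unfolding e by (subst sum.reindex) auto
qed

lemma right_inv_left:
  fixes A B :: "nat \<Rightarrow> nat \<Rightarrow> 'a::field"
  assumes "\<forall>i\<in>{1..r}. \<forall>j\<in>{1..r}. (\<Sum>l\<in>{1..r}. A i l * B l j) = (if i = j then 1 else 0)"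
  shows "\<forall>i\<in>{1..r}. \<forall>j\<in>{1..r}. (\<Sum>l\<in>{1..r}. B i l * A l j) = (if i = j then 1 else 0)"
proof -
  define A' where "A' = mat r r (\<lambda>(i,j). A (Suc i) (Suc j))"
  define B' where "B' = mat r r (\<lambda>(i,j). B (Suc i) (Suc j))"
  have cA: "A' \<in> carrier_mat r r" and cB: "B' \<in> carrier_mat r r" by (auto simp: A'_def B'_def)
  have "A' * B' = 1\<^sub>m r"
  proof (rule eq_matI)
    fix i j assume i: "i < dim_row (1\<^sub>m r)" and j: "j < dim_col (1\<^sub>m r)"
    have "(A' * B') $$ (i,j) = (\<Sum>l\<in>{0..<r}. A (Suc i) (Suc l) * B (Suc l) (Suc j))"
      using i j by (simp add: A'_def B'_def scalar_prod_def)
    also have "\<dots> = (\<Sum>l\<in>{1..r}. A (Suc i) l * B l (Suc j))" using sum_shift1[of "\<lambda>l. A (Suc i) l * B l (Suc j)" r] by simp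
    also have "\<dots> = (if i = j then 1 else 0)" using assms i j by auto
    finally show "(A' * B') $$ (i,j) = 1\<^sub>m r $$ (i,j)" using i j by simp
  qed (auto simp: A'_def B'_def)
  then have BA: "B' * A' = 1\<^sub>m r" using mat_mult_left_right_inverse[OF cA cB] by simp
  show ?thesis
  proof (intro ballI)
    fix i j assume i: "i \<in> {1..r}" and j: "j \<in> {1..r}"
    obtain i' j' where ii: "i = Suc i'" "j = Suc j'" "i' < r" "j' < r" using i j
      by (metis Suc_le_lessD Suc_pred' atLeastAtMost_iff less_eq_Suc_le not_one_le_zero zero_less_iff_neq_zero)
    have "(\<Sum>l\<in>{1..r}. B i l * A l j) = (\<Sum>l\<in>{0..<r}. B (Suc i') (Suc l) * A (Suc l) (Suc j'))"
      using sum_shift1[of "\<lambda>l. B i l * A l j" r] by (simp add: ii)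
    also have "\<dots> = (B' * A') $$ (i',j')" using ii by (simp add: A'_def B'_def scalar_prod_def)
    also have "\<dots> = (if i = j then 1 else 0)" using BA ii by simp
    finally show "(\<Sum>l\<in>{1..r}. B i l * A l j) = (if i = j then 1 else 0)" .
  qed
qed


definition ev :: "nat \<Rightarrow> nat \<Rightarrow> complex" where "ev a = (\<lambda>x. if x = a then 1 else 0)"

lemma row_in: "row_vec r lam i \<in> Vsp r" by (simp add: row_vec_def Vsp_def)
lemma pmult_in: "f \<in> Vsp r \<Longrightarrow> pmult f g \<in> Vsp r" by (simp add: pmult_def Vsp_def)
lemma pmult_in2: "g \<in> Vsp r \<Longrightarrow> pmult f g \<in> Vsp r" by (simp add: pmult_def Vsp_def)
lemma ev_in: "a \<in> {1..r} \<Longrightarrow> ev a \<in> Vsp r" by (auto simp add: ev_def Vsp_def)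
lemma pmult_comm: "pmult f g = pmult g f" by (simp add: pmult_def mult.commute)
lemma pmult_assoc: "pmult (pmult f g) h = pmult f (pmult g h)" by (simp add: pmult_def mult.assoc)
lemma lin_in: "finite S \<Longrightarrow> (\<forall>x\<in>S. f x \<in> Vsp r) \<Longrightarrow> (\<lambda>j. \<Sum>x\<in>S. c x * f x j) \<in> Vsp r"
  by (simp add: Vsp_def)

lemma expand_ev: "f \<in> Vsp r \<Longrightarrow> f = (\<lambda>x. \<Sum>a\<in>{1..r}. f a * ev a x)"
proof
  fix x assume f: "f \<in> Vsp r"
  show "f x = (\<Sum>a\<in>{1..r}. f a * ev a x)"
  proof (cases "x \<in> {1..r}")
    case True
    then have "(\<Sum>a\<in>{1..r}. f a * ev a x) = (\<Sum>a\<in>{1..r}. if a = x then f x else 0)"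
      by (intro sum.cong) (auto simp: ev_def)
    then show ?thesis using True by simp
  next
    case False then show ?thesis using f by (auto simp: Vsp_def ev_def intro!: sum.neutral)
  qed
qed

context
  fixes r :: nat and ip :: "(nat \<Rightarrow> complex) \<Rightarrow> (nat \<Rightarrow> complex) \<Rightarrow> complex"
  assumes IP: "is_inner_product r ip"
begin

lemma ip_add: "f \<in> Vsp r \<Longrightarrow> g \<in> Vsp r \<Longrightarrow> h \<in> Vsp r \<Longrightarrow> ip (\<lambda>j. f j + g j) h = ip f h + ip g h"
  using IP unfolding is_inner_product_def by blast
lemma ip_scal: "f \<in> Vsp r \<Longrightarrow> g \<in> Vsp r \<Longrightarrow> ip (\<lambda>j. c * f j) g = c * ip f g"
  using IP unfolding is_inner_product_def by blast
lemma ip_cnj: "f \<in> Vsp r \<Longrightarrow> g \<in> Vsp r \<Longrightarrow> ip g f = cnj (ip f g)"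
  using IP unfolding is_inner_product_def by blast
lemma ip_pos: "f \<in> Vsp r \<Longrightarrow> f \<noteq> (\<lambda>_. 0) \<Longrightarrow> Re (ip f f) > 0"
  using IP unfolding is_inner_product_def by blast

lemma ip_zero: "h \<in> Vsp r \<Longrightarrow> ip (\<lambda>j. 0) h = 0"
proof -
  assume h: "h \<in> Vsp r"
  have "ip (\<lambda>j. 0 * h j) h = 0 * ip h h" using ip_scal[OF h h] .
  then show ?thesis by simp
qed

lemma ip_sum: "finite S \<Longrightarrow> (\<forall>x\<in>S. f x \<in> Vsp r) \<Longrightarrow> h \<in> Vsp r \<Longrightarrow>
   ip (\<lambda>j. \<Sum>x\<in>S. c x * f x j) h = (\<Sum>x\<in>S. c x * ip (f x) h)"
proof (induction S rule: finite_induct)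
  case empty then show ?case using ip_zero by simp
next
  case (insert y S)
  have "ip (\<lambda>j. \<Sum>x\<in>insert y S. c x * f x j) h = ip (\<lambda>j. c y * f y j + (\<Sum>x\<in>S. c x * f x j)) h"
    using insert by simp
  also have "\<dots> = ip (\<lambda>j. c y * f y j) h + ip (\<lambda>j. \<Sum>x\<in>S. c x * f x j) h"
    using ip_add[of "\<lambda>j. c y * f y j" "\<lambda>j. \<Sum>x\<in>S. c x * f x j" h] insert lin_in[of S f r c]
    by (simp add: Vsp_def)
  also have "\<dots> = c y * ip (f y) h + (\<Sum>x\<in>S. c x * ip (f x) h)"
    using insert ip_scal by simp
  finally show ?case using insert by simp
qed

lemma ip_sum2: "finite S \<Longrightarrow> (\<forall>x\<in>S. f x \<in> Vsp r) \<Longrightarrow> h \<in> Vsp r \<Longrightarrow>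
   ip h (\<lambda>j. \<Sum>x\<in>S. c x * f x j) = (\<Sum>x\<in>S. cnj (c x) * ip h (f x))"
proof -
  assume a: "finite S" "\<forall>x\<in>S. f x \<in> Vsp r" "h \<in> Vsp r"
  have X: "(\<lambda>j. \<Sum>x\<in>S. c x * f x j) \<in> Vsp r" using lin_in[of S f r c] a by blast
  have "ip h (\<lambda>j. \<Sum>x\<in>S. c x * f x j) = cnj (ip (\<lambda>j. \<Sum>x\<in>S. c x * f x j) h)"
    using ip_cnj[OF X a(3)] .
  also have "\<dots> = cnj (\<Sum>x\<in>S. c x * ip (f x) h)" using ip_sum[OF a] by (rule arg_cong)
  also have "\<dots> = (\<Sum>x\<in>S. cnj (c x) * cnj (ip (f x) h))" by simp
  also have "\<dots> = (\<Sum>x\<in>S. cnj (c x) * ip h (f x))"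
  proof (rule sum.cong)
    fix x assume "x \<in> S"
    then have "ip h (f x) = cnj (ip (f x) h)" using a ip_cnj[of "f x" h] by blast
    then show "cnj (c x) * cnj (ip (f x) h) = cnj (c x) * ip h (f x)" by simp
  qed simp
  finally show ?thesis .
qed

lemma ip_scal2: "f \<in> Vsp r \<Longrightarrow> g \<in> Vsp r \<Longrightarrow> ip g (\<lambda>j. c * f j) = cnj c * ip g f"
proof -
  assume a: "f \<in> Vsp r" "g \<in> Vsp r"
  have X: "(\<lambda>j. c * f j) \<in> Vsp r" using a by (simp add: Vsp_def)
  have "ip g (\<lambda>j. c * f j) = cnj (ip (\<lambda>j. c * f j) g)" using ip_cnj[OF X a(2)] .
  also have "\<dots> = cnj (c * ip f g)" using ip_scal[OF a] by (rule arg_cong)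
  also have "\<dots> = cnj c * cnj (ip f g)" by simp
  also have "cnj (ip f g) = ip g f" using ip_cnj[OF a(2) a(1)] by simp
  finally show ?thesis .
qed

end

context
  fixes r :: nat and ip :: "(nat \<Rightarrow> complex) \<Rightarrow> (nat \<Rightarrow> complex) \<Rightarrow> complex"
    and lam :: "nat \<Rightarrow> nat \<Rightarrow> complex"
  assumes IP: "is_inner_product r ip" and EC: "eigen_conditions r lam ip" and r1: "r \<ge> 1"
begin

abbreviation "lv i \<equiv> row_vec r lam i"

lemma orth: "i \<in> {1..r} \<Longrightarrow> j \<in> {1..r} \<Longrightarrow> ip (lv i) (lv j) = (if i = j then 1 else 0)"
  using EC unfolding eigen_conditions_def by blast
lemma adj_ex: "i \<in> {1..r} \<Longrightarrow> \<exists>j\<in>{1..r}. adjoint_mult r ip (lv i) (lv j)"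
  using EC unfolding eigen_conditions_def by blast
lemma unit1: "g \<in> Vsp r \<Longrightarrow> pmult (lv 1) g = g"
  using EC unfolding eigen_conditions_def by blast
lemma nat_ex: "i \<in> {1..r} \<Longrightarrow> j \<in> {1..r} \<Longrightarrow> k \<in> {1..r} \<Longrightarrow>
    \<exists>n::nat. ip (pmult (lv i) (lv j)) (lv k) = of_nat n"
  using EC unfolding eigen_conditions_def by blast

lemma lv_eq: "a \<in> {1..r} \<Longrightarrow> lv i a = lam i a" by (simp add: row_vec_def)

definition "Xm a m = ip (ev a) (lv m)"

lemma ip_expand: "f \<in> Vsp r \<Longrightarrow> h \<in> Vsp r \<Longrightarrow> ip f h = (\<Sum>a\<in>{1..r}. f a * ip (ev a) h)"
proof -
  assume f: "f \<in> Vsp r" and h: "h \<in> Vsp r"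
  have "ip f h = ip (\<lambda>x. \<Sum>a\<in>{1..r}. f a * ev a x) h" using expand_ev[OF f] by simp
  also have "\<dots> = (\<Sum>a\<in>{1..r}. f a * ip (ev a) h)"
    using ip_sum[OF IP, of "{1..r}" ev h f] h ev_in by blast
  finally show ?thesis .
qed

lemma LX: "\<forall>i\<in>{1..r}. \<forall>m\<in>{1..r}. (\<Sum>a\<in>{1..r}. lam i a * Xm a m) = (if i = m then 1 else 0)"
proof (intro ballI)
  fix i m assume i: "i \<in> {1..r}" and m: "m \<in> {1..r}"
  have "(\<Sum>a\<in>{1..r}. lam i a * Xm a m) = (\<Sum>a\<in>{1..r}. lv i a * ip (ev a) (lv m))"
    by (intro sum.cong) (auto simp: lv_eq Xm_def)
  also have "\<dots> = ip (lv i) (lv m)" using ip_expand[OF row_in row_in] by simp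
  finally show "(\<Sum>a\<in>{1..r}. lam i a * Xm a m) = (if i = m then 1 else 0)" using orth i m by simp
qed

lemma XL: "\<forall>a\<in>{1..r}. \<forall>b\<in>{1..r}. (\<Sum>m\<in>{1..r}. Xm a m * lam m b) = (if a = b then 1 else 0)"
  using right_inv_left[OF LX] .

lemma F1: "f \<in> Vsp r \<Longrightarrow> f = (\<lambda>x. \<Sum>m\<in>{1..r}. ip f (lv m) * lv m x)"
proof
  fix x assume f: "f \<in> Vsp r"
  show "f x = (\<Sum>m\<in>{1..r}. ip f (lv m) * lv m x)"
  proof (cases "x \<in> {1..r}")
    case True
    have "(\<Sum>m\<in>{1..r}. ip f (lv m) * lv m x) = (\<Sum>m\<in>{1..r}. (\<Sum>a\<in>{1..r}. f a * Xm a m) * lam m x)"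
      using ip_expand[OF f row_in] True by (intro sum.cong) (auto simp: lv_eq Xm_def)
    also have "\<dots> = (\<Sum>a\<in>{1..r}. f a * (\<Sum>m\<in>{1..r}. Xm a m * lam m x))"
      by (simp add: sum_distrib_left sum_distrib_right mult.assoc) (rule sum.swap)
    also have "\<dots> = (\<Sum>a\<in>{1..r}. if a = x then f x else 0)"
      using XL True by (intro sum.cong) auto
    finally show ?thesis using True by simp
  next
    case False then show ?thesis using f by (auto simp: Vsp_def row_vec_def)
  qed
qed


definition "Nc i j k = ip (pmult (lv i) (lv j)) (lv k)"
definition "Nn i j k = nat \<lfloor>Re (Nc i j k)\<rfloor>"

lemma Nn_eq: "i \<in> {1..r} \<Longrightarrow> j \<in> {1..r} \<Longrightarrow> k \<in> {1..r} \<Longrightarrow> of_nat (Nn i j k) = Nc i j k"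
proof -
  assume a: "i \<in> {1..r}" "j \<in> {1..r}" "k \<in> {1..r}"
  obtain n :: nat where n: "Nc i j k = of_nat n" using nat_ex[OF a] unfolding Nc_def by blast
  then show ?thesis by (simp add: Nn_def)
qed

lemma Nc_real: "i \<in> {1..r} \<Longrightarrow> j \<in> {1..r} \<Longrightarrow> k \<in> {1..r} \<Longrightarrow> cnj (Nc i j k) = Nc i j k"
  using Nn_eq[of i j k] by (metis complex_cnj_of_nat)

lemma Nc_comm: "Nc i j k = Nc j i k" by (simp add: Nc_def pmult_comm)

definition "dd i = (SOME j. j \<in> {1..r} \<and> adjoint_mult r ip (lv i) (lv j))"

lemma dd: "i \<in> {1..r} \<Longrightarrow> dd i \<in> {1..r} \<and> adjoint_mult r ip (lv i) (lv (dd i))"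
  unfolding dd_def using adj_ex[of i] by (metis (no_types, lifting) someI_ex)

lemma adj: "i \<in> {1..r} \<Longrightarrow> g \<in> Vsp r \<Longrightarrow> h \<in> Vsp r \<Longrightarrow>
   ip (pmult (lv i) g) h = ip g (pmult (lv (dd i)) h)"
  using dd[of i] unfolding adjoint_mult_def by blast

lemma prod_exp: "pmult (lv i) (lv j) = (\<lambda>x. \<Sum>m\<in>{1..r}. Nc i j m * lv m x)"
  unfolding Nc_def by (rule F1[OF pmult_in[OF row_in]])

lemma exp_ip: "k \<in> {1..r} \<Longrightarrow> l \<in> {1..r} \<Longrightarrow>
  ip (pmult (pmult (lv i) (lv j)) (lv k)) (lv l) = (\<Sum>m\<in>{1..r}. Nc i j m * Nc m k l)"
proof -
  have "pmult (pmult (lv i) (lv j)) (lv k) = (\<lambda>x. \<Sum>m\<in>{1..r}. Nc i j m * pmult (lv m) (lv k) x)"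
    by (subst prod_exp[of i j]) (simp add: pmult_def sum_distrib_right mult.assoc)
  then have "ip (pmult (pmult (lv i) (lv j)) (lv k)) (lv l) = (\<Sum>m\<in>{1..r}. Nc i j m * ip (pmult (lv m) (lv k)) (lv l))"
    using ip_sum[OF IP, of "{1..r}" "\<lambda>m. pmult (lv m) (lv k)" "lv l" "Nc i j"] pmult_in[OF row_in] row_in
    by simp
  then show ?thesis by (simp add: Nc_def)
qed

lemma assoc_c: "k \<in> {1..r} \<Longrightarrow> l \<in> {1..r} \<Longrightarrow>
  (\<Sum>m\<in>{1..r}. Nc i j m * Nc m k l) = (\<Sum>m\<in>{1..r}. Nc j k m * Nc i m l)"
proof -
  assume k: "k \<in> {1..r}" and l: "l \<in> {1..r}"
  have "pmult (pmult (lv i) (lv j)) (lv k) = pmult (pmult (lv j) (lv k)) (lv i)"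
    by (simp add: pmult_def mult_ac)
  then have "(\<Sum>m\<in>{1..r}. Nc i j m * Nc m k l) = ip (pmult (pmult (lv j) (lv k)) (lv i)) (lv l)"
    using exp_ip[OF k l, of i j] by simp
  also have "\<dots> = (\<Sum>m\<in>{1..r}. Nc j k m * Nc m i l)"
  proof -
    have "pmult (pmult (lv j) (lv k)) (lv i) = (\<lambda>x. \<Sum>m\<in>{1..r}. Nc j k m * pmult (lv m) (lv i) x)"
      by (subst prod_exp[of j k]) (simp add: pmult_def sum_distrib_right mult.assoc)
    then show ?thesis
      using ip_sum[OF IP, of "{1..r}" "\<lambda>m. pmult (lv m) (lv i)" "lv l" "Nc j k"] pmult_in[OF row_in] row_in
      by (simp add: Nc_def)
  qed
  also have "\<dots> = (\<Sum>m\<in>{1..r}. Nc j k m * Nc i m l)" using Nc_comm by simp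
  finally show ?thesis .
qed

lemma unit_c: "j \<in> {1..r} \<Longrightarrow> k \<in> {1..r} \<Longrightarrow> Nc 1 j k = (if j = k then 1 else 0) \<and> Nc j 1 k = (if j = k then 1 else 0)"
proof -
  assume j: "j \<in> {1..r}" and k: "k \<in> {1..r}"
  have "Nc 1 j k = (if j = k then 1 else 0)" using unit1[OF row_in[of r lam j]] orth[OF j k] by (simp add: Nc_def)
  then show ?thesis using Nc_comm by metis
qed

lemma dual_c: "i \<in> {1..r} \<Longrightarrow> k \<in> {1..r} \<Longrightarrow> Nc i k 1 = (if k = dd i then 1 else 0)"
proof -
  assume i: "i \<in> {1..r}" and k: "k \<in> {1..r}"
  have "Nc i k 1 = ip (lv k) (pmult (lv (dd i)) (lv 1))" unfolding Nc_def using adj[OF i row_in row_in] .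
  also have "pmult (lv (dd i)) (lv 1) = lv (dd i)" using unit1[OF row_in[of r lam "dd i"]] pmult_comm by metis
  finally show ?thesis using orth[OF k] dd[OF i] by simp
qed

lemma frob1_c: "i \<in> {1..r} \<Longrightarrow> j \<in> {1..r} \<Longrightarrow> k \<in> {1..r} \<Longrightarrow> Nc i j k = Nc (dd i) k j"
proof -
  assume i: "i \<in> {1..r}" and j: "j \<in> {1..r}" and k: "k \<in> {1..r}"
  have "Nc i j k = ip (lv j) (pmult (lv (dd i)) (lv k))" unfolding Nc_def using adj[OF i row_in row_in] .
  also have "\<dots> = cnj (Nc (dd i) k j)" unfolding Nc_def using ip_cnj[OF IP pmult_in[OF row_in] row_in] .
  also have "\<dots> = Nc (dd i) k j" using Nc_real dd[OF i] j k by blast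
  finally show ?thesis .
qed

lemma frob2_c: "i \<in> {1..r} \<Longrightarrow> j \<in> {1..r} \<Longrightarrow> k \<in> {1..r} \<Longrightarrow> Nc i j k = Nc k (dd j) i"
proof -
  assume i: "i \<in> {1..r}" and j: "j \<in> {1..r}" and k: "k \<in> {1..r}"
  have "Nc i j k = Nc j i k" by (rule Nc_comm)
  also have "\<dots> = Nc (dd j) k i" using frob1_c[OF j i k] .
  also have "\<dots> = Nc k (dd j) i" by (rule Nc_comm)
  finally show ?thesis .
qed

lemma F5: "i \<in> {1..r} \<Longrightarrow> a \<in> {1..r} \<Longrightarrow> lam i a = cnj (lam (dd i) a)"
proof -
  assume i: "i \<in> {1..r}" and a: "a \<in> {1..r}"
  have e: "pmult (lv t) (ev a) = (\<lambda>x. lam t a * ev a x)" for t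
    using a by (auto simp: pmult_def row_vec_def ev_def)
  have "ip (pmult (lv i) (ev a)) (ev a) = ip (ev a) (pmult (lv (dd i)) (ev a))"
    using adj[OF i ev_in[OF a] ev_in[OF a]] .
  then have "lam i a * ip (ev a) (ev a) = cnj (lam (dd i) a) * ip (ev a) (ev a)"
    unfolding e using ip_scal[OF IP ev_in[OF a] ev_in[OF a]] ip_scal2[OF IP ev_in[OF a] ev_in[OF a]] by simp
  moreover have "ev a \<noteq> (\<lambda>_. 0)" by (metis ev_def zero_neq_one)
  then have "Re (ip (ev a) (ev a)) > 0" using ip_pos[OF IP ev_in[OF a]] by blast
  then have "ip (ev a) (ev a) \<noteq> 0" by auto
  ultimately show ?thesis by simp
qed

lemma eigen_part: "eigentable r Nn lam"
proof -
  have PQ: "\<forall>k\<in>{1..r}. \<forall>m\<in>{1..r}. (\<Sum>l\<in>{1..r}. cnj (lam k l) * cnj (Xm l m)) = (if k = m then 1 else 0)"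
  proof (intro ballI)
    fix k m assume k: "k \<in> {1..r}" and m: "m \<in> {1..r}"
    have "(\<Sum>l\<in>{1..r}. cnj (lam k l) * cnj (Xm l m)) = cnj (\<Sum>l\<in>{1..r}. lam k l * Xm l m)" by simp
    also have "(\<Sum>l\<in>{1..r}. lam k l * Xm l m) = (if k = m then 1 else 0)" using LX k m by blast
    finally show "(\<Sum>l\<in>{1..r}. cnj (lam k l) * cnj (Xm l m)) = (if k = m then 1 else 0)" by simp
  qed
  have QP: "\<forall>k\<in>{1..r}. \<forall>m\<in>{1..r}. (\<Sum>l\<in>{1..r}. cnj (Xm k l) * cnj (lam l m)) = (if k = m then 1 else 0)"
  proof (intro ballI)
    fix k m assume k: "k \<in> {1..r}" and m: "m \<in> {1..r}"
    have "(\<Sum>l\<in>{1..r}. cnj (Xm k l) * cnj (lam l m)) = cnj (\<Sum>l\<in>{1..r}. Xm k l * lam l m)" by simp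
    also have "(\<Sum>l\<in>{1..r}. Xm k l * lam l m) = (if k = m then 1 else 0)" using XL k m by blast
    finally show "(\<Sum>l\<in>{1..r}. cnj (Xm k l) * cnj (lam l m)) = (if k = m then 1 else 0)" by simp
  qed
  have EG: "\<forall>i\<in>{1..r}. \<forall>j\<in>{1..r}. \<forall>k\<in>{1..r}.
     (\<Sum>l\<in>{1..r}. of_nat (Nn i l k) * cnj (lam l j)) = lam i j * cnj (lam k j)"
  proof (intro ballI)
    fix i j k assume i: "i \<in> {1..r}" and j: "j \<in> {1..r}" and k: "k \<in> {1..r}"
    have "(\<Sum>l\<in>{1..r}. of_nat (Nn i l k) * cnj (lam l j)) = (\<Sum>l\<in>{1..r}. cnj (Nc (dd i) k l * lam l j))"
    proof (rule sum.cong)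
      fix l assume l: "l \<in> {1..r}"
      have "of_nat (Nn i l k) = Nc (dd i) k l" using Nn_eq[OF i l k] frob1_c[OF i l k] by simp
      also have "\<dots> = cnj (Nc (dd i) k l)" using Nc_real dd[OF i] k l by metis
      finally show "of_nat (Nn i l k) * cnj (lam l j) = cnj (Nc (dd i) k l * lam l j)" by simp
    qed simp
    also have "\<dots> = cnj (\<Sum>l\<in>{1..r}. Nc (dd i) k l * lv l j)" using j by (simp add: lv_eq)
    also have "(\<Sum>l\<in>{1..r}. Nc (dd i) k l * lv l j) = pmult (lv (dd i)) (lv k) j"
      using fun_cong[OF prod_exp[of "dd i" k], of j] by simp
    also have "\<dots> = lam (dd i) j * lam k j" using j by (simp add: pmult_def lv_eq)
    finally show "(\<Sum>l\<in>{1..r}. of_nat (Nn i l k) * cnj (lam l j)) = lam i j * cnj (lam k j)"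
      using F5[OF i j] by simp
  qed
  show ?thesis unfolding eigentable_def
    apply (rule exI[of _ "\<lambda>l j. cnj (lam l j)"])
    apply (rule exI[of _ "\<lambda>l m. cnj (Xm l m)"])
    using PQ QP EG by blast
qed

lemma fwd_main: "\<exists>(N :: nat \<Rightarrow> nat \<Rightarrow> nat \<Rightarrow> nat) d.
          (\<forall>i\<in>{1..r}. \<forall>j\<in>{1..r}. \<forall>k\<in>{1..r}.
             of_nat (N i j k) = ip (pmult (row_vec r lam i) (row_vec r lam j)) (row_vec r lam k)) \<and>
          comm_fusion_ring r N d \<and>
          (\<forall>i\<in>{1..r}. adjoint_mult r ip (row_vec r lam i) (row_vec r lam (d i))) \<and>
          eigentable r N lam"
proof (intro exI[of _ Nn] exI[of _ dd] conjI ballI)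
  fix i j k assume i: "i \<in> {1..r}" and j: "j \<in> {1..r}" and k: "k \<in> {1..r}"
  show "of_nat (Nn i j k) = ip (pmult (lv i) (lv j)) (lv k)" using Nn_eq[OF i j k] by (simp add: Nc_def)
next
  show "eigentable r Nn lam" by (rule eigen_part)
next
  fix i assume "i \<in> {1..r}" then show "adjoint_mult r ip (lv i) (lv (dd i))" using dd by blast
next
  have one: "1 \<in> {1..r}" using r1 by simp
  have inj: "(a::nat) = b" if "(of_nat a :: complex) = of_nat b" for a b using that by simp
  show "comm_fusion_ring r Nn dd"
    unfolding comm_fusion_ring_def fusion_ring_def
  proof (intro conjI ballI)
    show "r \<ge> 1" by (rule r1)
  next
    fix i j k l assume i: "i \<in> {1..r}" and j: "j \<in> {1..r}" and k: "k \<in> {1..r}" and l: "l \<in> {1..r}"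
    have "(of_nat (\<Sum>m\<in>{1..r}. Nn i j m * Nn m k l) :: complex) = (\<Sum>m\<in>{1..r}. Nc i j m * Nc m k l)"
      using i j k l Nn_eq by simp
    also have "\<dots> = (\<Sum>m\<in>{1..r}. Nc j k m * Nc i m l)" using assoc_c[OF k l] .
    also have "\<dots> = of_nat (\<Sum>m\<in>{1..r}. Nn j k m * Nn i m l)"
      using i j k l Nn_eq by simp
    finally show "(\<Sum>m\<in>{1..r}. Nn i j m * Nn m k l) = (\<Sum>m\<in>{1..r}. Nn j k m * Nn i m l)" by (rule inj)
  next
    fix j k assume j: "j \<in> {1..r}" and k: "k \<in> {1..r}"
    show "Nn 1 j k = (if j = k then 1 else 0)" using unit_c[OF j k] Nn_eq[OF one j k]
      by (metis inj of_nat_0 of_nat_1)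
    show "Nn j 1 k = (if j = k then 1 else 0)" using unit_c[OF j k] Nn_eq[OF j one k]
      by (metis inj of_nat_0 of_nat_1)
  next
    fix i assume i: "i \<in> {1..r}"
    show "dd i \<in> {1..r}" using dd[OF i] by blast
  next
    fix i k assume i: "i \<in> {1..r}" and k: "k \<in> {1..r}"
    show "Nn i k 1 = (if k = dd i then 1 else 0)" using dual_c[OF i k] Nn_eq[OF i k one]
      by (metis inj of_nat_0 of_nat_1)
    show "Nn k i 1 = (if k = dd i then 1 else 0)" using dual_c[OF i k] Nn_eq[OF k i one] Nc_comm
      by (metis inj of_nat_0 of_nat_1)
  next
    fix i j k assume i: "i \<in> {1..r}" and j: "j \<in> {1..r}" and k: "k \<in> {1..r}"
    show "Nn i j k = Nn (dd i) k j" using frob1_c[OF i j k] Nn_eq[OF i j k] Nn_eq[of "dd i" k j] dd[OF i] j k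
      by (metis inj)
    show "Nn i j k = Nn k (dd j) i" using frob2_c[OF i j k] Nn_eq[OF i j k] Nn_eq[of k "dd j" i] dd[OF j] i k
      by (metis inj)
    show "Nn i j k = Nn j i k" using Nn_eq[OF i j k] Nn_eq[OF j i k] Nc_comm by (metis inj)
  qed
qed

end


lemma sdelta2: "finite S \<Longrightarrow> a \<in> S \<Longrightarrow> (\<Sum>x\<in>S. (f x :: 'a::comm_ring_1) * (if x = a then 1 else 0)) = f a"
  by (simp add: if_distrib cong: if_cong)
lemma sdelta3: "finite S \<Longrightarrow> a \<in> S \<Longrightarrow> (\<Sum>x\<in>S. (f x :: 'a::comm_ring_1) * (if a = x then 1 else 0)) = f a"
  by (simp add: if_distrib cong: if_cong)
lemma sdelta1: "finite S \<Longrightarrow> a \<in> S \<Longrightarrow> (\<Sum>x\<in>S. (if a = x then 1 else 0) * (f x :: 'a::comm_ring_1)) = f a"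
  using sdelta3[of S a f] by (simp add: mult.commute)
lemma sdelta4: "finite S \<Longrightarrow> a \<in> S \<Longrightarrow> (\<Sum>x\<in>S. (if x = a then 1 else 0) * (f x :: 'a::comm_ring_1)) = f a"
  using sdelta2[of S a f] by (simp add: mult.commute)


context
  fixes r :: nat and N :: "nat \<Rightarrow> nat \<Rightarrow> nat \<Rightarrow> nat" and d :: "nat \<Rightarrow> nat"
    and lam :: "nat \<Rightarrow> nat \<Rightarrow> complex" and P Q :: "nat \<Rightarrow> nat \<Rightarrow> complex"
  assumes CF: "comm_fusion_ring r N d"
    and PQ: "\<forall>k\<in>{1..r}. \<forall>m\<in>{1..r}. (\<Sum>l\<in>{1..r}. P k l * Q l m) = (if k = m then 1 else 0)"
    and QP: "\<forall>k\<in>{1..r}. \<forall>m\<in>{1..r}. (\<Sum>l\<in>{1..r}. Q k l * P l m) = (if k = m then 1 else 0)"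
    and EIG: "\<forall>i\<in>{1..r}. \<forall>j\<in>{1..r}. \<forall>k\<in>{1..r}.
           (\<Sum>l\<in>{1..r}. of_nat (N i l k) * P l j) = lam i j * P k j"
begin

abbreviation "R \<equiv> {1..r}"

lemma r1': "r \<ge> 1" using CF unfolding comm_fusion_ring_def fusion_ring_def by blast
lemma one_in: "1 \<in> R" using r1' by simp
lemma unitN: "j \<in> R \<Longrightarrow> k \<in> R \<Longrightarrow> N 1 j k = (if j = k then 1 else 0) \<and> N j 1 k = (if j = k then 1 else 0)"
  using CF unfolding comm_fusion_ring_def fusion_ring_def by blast
lemma d_in: "i \<in> R \<Longrightarrow> d i \<in> R"
  using CF unfolding comm_fusion_ring_def fusion_ring_def by blast
lemma dualN: "i \<in> R \<Longrightarrow> k \<in> R \<Longrightarrow> N i k 1 = (if k = d i then 1 else 0) \<and> N k i 1 = (if k = d i then 1 else 0)"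
  using CF unfolding comm_fusion_ring_def fusion_ring_def by blast
lemma frob1: "i \<in> R \<Longrightarrow> j \<in> R \<Longrightarrow> k \<in> R \<Longrightarrow> N i j k = N (d i) k j"
  using CF unfolding comm_fusion_ring_def fusion_ring_def by blast
lemma frob2: "i \<in> R \<Longrightarrow> j \<in> R \<Longrightarrow> k \<in> R \<Longrightarrow> N i j k = N k (d j) i"
  using CF unfolding comm_fusion_ring_def fusion_ring_def by blast
lemma commN: "i \<in> R \<Longrightarrow> j \<in> R \<Longrightarrow> k \<in> R \<Longrightarrow> N i j k = N j i k"
  using CF unfolding comm_fusion_ring_def fusion_ring_def by blast

lemma d1: "d 1 = 1"
proof -
  have "N 1 1 1 = 1" using unitN[OF one_in one_in] by simp
  moreover have "N 1 1 1 = (if 1 = d 1 then 1 else 0)" using dualN[OF one_in one_in] by blast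
  ultimately show ?thesis by (metis zero_neq_one)
qed

lemma dd_inv: "i \<in> R \<Longrightarrow> d (d i) = i"
proof -
  assume i: "i \<in> R"
  have "N i (d i) 1 = 1" using dualN[OF i d_in[OF i]] by simp
  then have "N (d i) i 1 = 1" using commN[OF i d_in[OF i] one_in] by simp
  moreover have "N (d i) i 1 = (if i = d (d i) then 1 else 0)" using dualN[OF d_in[OF i] i] by blast
  ultimately show ?thesis by (metis zero_neq_one)
qed

lemma sum_d: "(\<Sum>i\<in>R. g (d i)) = (\<Sum>i\<in>R. (g i :: complex))"
  by (rule sum.reindex_bij_witness[where i=d and j=d]) (use dd_inv d_in in blast)+

lemma E1: "i \<in> R \<Longrightarrow> j \<in> R \<Longrightarrow> P (d i) j = lam i j * P 1 j"
proof -
  assume i: "i \<in> R" and j: "j \<in> R"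
  have "(\<Sum>l\<in>R. of_nat (N i l 1) * P l j) = lam i j * P 1 j" using EIG i j one_in by blast
  moreover have "(\<Sum>l\<in>R. of_nat (N i l 1) * P l j) = (\<Sum>l\<in>R. (if l = d i then 1 else 0) * P l j)"
    using dualN[OF i] by (intro sum.cong) auto
  moreover have "\<dots> = P (d i) j" using sdelta4[of R "d i" "\<lambda>l. P l j"] d_in[OF i] by simp
  ultimately show ?thesis by simp
qed

lemma E1': "l \<in> R \<Longrightarrow> j \<in> R \<Longrightarrow> P l j = lam (d l) j * P 1 j"
  using E1[OF d_in] dd_inv by metis

lemma P1nz: "j \<in> R \<Longrightarrow> P 1 j \<noteq> 0"
proof
  assume j: "j \<in> R" and z: "P 1 j = 0"
  have "(\<Sum>l\<in>R. Q j l * P l j) = 1" using QP j by simp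
  moreover have "(\<Sum>l\<in>R. Q j l * P l j) = 0" using E1'[OF _ j] z by (intro sum.neutral) simp
  ultimately show False by simp
qed

lemma lam_eq: "i \<in> R \<Longrightarrow> j \<in> R \<Longrightarrow> lam i j = P (d i) j / P 1 j"
  using E1 P1nz by simp

definition "Y a m = P 1 a * Q a (d m)"

lemma LY: "i \<in> R \<Longrightarrow> m \<in> R \<Longrightarrow> (\<Sum>j\<in>R. lam i j * Y j m) = (if i = m then 1 else 0)"
proof -
  assume i: "i \<in> R" and m: "m \<in> R"
  have "(\<Sum>j\<in>R. lam i j * Y j m) = (\<Sum>j\<in>R. P (d i) j * Q j (d m))"
    using E1[OF i] by (intro sum.cong) (auto simp: Y_def mult.assoc)
  also have "\<dots> = (if d i = d m then 1 else 0)" using PQ d_in i m by blast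
  also have "\<dots> = (if i = m then 1 else 0)" using dd_inv i m by metis
  finally show ?thesis .
qed

lemma YL: "a \<in> R \<Longrightarrow> b \<in> R \<Longrightarrow> (\<Sum>i\<in>R. Y a i * lam i b) = (if a = b then 1 else 0)"
proof -
  assume a: "a \<in> R" and b: "b \<in> R"
  have "(\<Sum>i\<in>R. Y a i * lam i b) = (\<Sum>i\<in>R. P 1 a / P 1 b * (Q a (d i) * P (d i) b))"
    using lam_eq b by (intro sum.cong) (auto simp: Y_def)
  also have "\<dots> = P 1 a / P 1 b * (\<Sum>i\<in>R. Q a (d i) * P (d i) b)" by (simp add: sum_distrib_left)
  also have "(\<Sum>i\<in>R. Q a (d i) * P (d i) b) = (\<Sum>i\<in>R. Q a i * P i b)"
    using sum_d[of "\<lambda>i. Q a i * P i b"] .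
  also have "\<dots> = (if a = b then 1 else 0)" using QP a b by blast
  finally show ?thesis using P1nz[OF b] by simp
qed

lemma Nswap: "i \<in> R \<Longrightarrow> m \<in> R \<Longrightarrow> l \<in> R \<Longrightarrow> N i (d l) (d m) = N i m l"
proof -
  assume i: "i \<in> R" and m: "m \<in> R" and l: "l \<in> R"
  have "N i m l = N l (d m) i" using frob2[OF i m l] .
  also have "\<dots> = N (d l) i (d m)" using frob1[OF l d_in[OF m] i] .
  also have "\<dots> = N i (d l) (d m)" using commN[OF d_in[OF l] i d_in[OF m]] .
  finally show ?thesis by simp
qed

lemma prodN: "i \<in> R \<Longrightarrow> m \<in> R \<Longrightarrow> j \<in> R \<Longrightarrow> lam i j * lam m j = (\<Sum>l\<in>R. of_nat (N i m l) * lam l j)"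
proof -
  assume i: "i \<in> R" and m: "m \<in> R" and j: "j \<in> R"
  have "(\<Sum>l\<in>R. of_nat (N i l (d m)) * P l j) = lam i j * P (d m) j" using EIG i j d_in[OF m] by blast
  also have "\<dots> = lam i j * lam m j * P 1 j" using E1[OF m j] by simp
  finally have 1: "(\<Sum>l\<in>R. of_nat (N i l (d m)) * P l j) = lam i j * lam m j * P 1 j" .
  have "(\<Sum>l\<in>R. of_nat (N i l (d m)) * P l j) = (\<Sum>l\<in>R. of_nat (N i l (d m)) * lam (d l) j * P 1 j)"
  proof (rule sum.cong)
    fix l assume l: "l \<in> R"
    show "of_nat (N i l (d m)) * P l j = of_nat (N i l (d m)) * lam (d l) j * P 1 j"
      by (subst E1'[OF l j]) (simp add: mult.assoc)
  qed simp
  also have "\<dots> = (\<Sum>l\<in>R. of_nat (N i l (d m)) * lam (d l) j) * P 1 j" by (simp add: sum_distrib_right)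
  finally have "(\<Sum>l\<in>R. of_nat (N i l (d m)) * lam (d l) j) * P 1 j = lam i j * lam m j * P 1 j"
    using 1 by simp
  then have "lam i j * lam m j = (\<Sum>l\<in>R. of_nat (N i l (d m)) * lam (d l) j)" using P1nz[OF j] by simp
  also have "\<dots> = (\<Sum>l\<in>R. of_nat (N i (d l) (d m)) * lam (d (d l)) j)"
    using sum_d[of "\<lambda>l. of_nat (N i l (d m)) * lam (d l) j"] by simp
  also have "\<dots> = (\<Sum>l\<in>R. of_nat (N i m l) * lam l j)"
    using Nswap[OF i m] dd_inv by (intro sum.cong) auto
  finally show ?thesis .
qed


definition "cf f m = (\<Sum>a\<in>R. f a * Y a m)"
definition "ipb f g = (\<Sum>m\<in>R. cf f m * cnj (cf g m))"

lemma rv: "a \<in> R \<Longrightarrow> row_vec r lam k a = lam k a" by (simp add: row_vec_def)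

lemma cf_row: "k \<in> R \<Longrightarrow> m \<in> R \<Longrightarrow> cf (row_vec r lam k) m = (if k = m then 1 else 0)"
  unfolding cf_def using LY by (simp add: rv)

lemma recon: "f \<in> Vsp r \<Longrightarrow> b \<in> R \<Longrightarrow> f b = (\<Sum>a\<in>R. cf f a * lam a b)"
proof -
  assume f: "f \<in> Vsp r" and b: "b \<in> R"
  have "(\<Sum>a\<in>R. cf f a * lam a b) = (\<Sum>a\<in>R. \<Sum>c\<in>R. f c * (Y c a * lam a b))"
    by (simp add: cf_def sum_distrib_right mult.assoc)
  also have "\<dots> = (\<Sum>c\<in>R. \<Sum>a\<in>R. f c * (Y c a * lam a b))" by (rule sum.swap)
  also have "\<dots> = (\<Sum>c\<in>R. f c * (\<Sum>a\<in>R. Y c a * lam a b))" by (simp add: sum_distrib_left)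
  also have "\<dots> = (\<Sum>c\<in>R. f c * (if c = b then 1 else 0))" using YL b by (intro sum.cong) auto
  also have "\<dots> = f b" using sdelta2[of R b f] b by simp
  finally show ?thesis by simp
qed

lemma cf_mult: "i \<in> R \<Longrightarrow> g \<in> Vsp r \<Longrightarrow> m \<in> R \<Longrightarrow>
   cf (pmult (row_vec r lam i) g) m = (\<Sum>a\<in>R. cf g a * of_nat (N i a m))"
proof -
  assume i: "i \<in> R" and g: "g \<in> Vsp r" and m: "m \<in> R"
  have "cf (pmult (row_vec r lam i) g) m = (\<Sum>b\<in>R. pmult (row_vec r lam i) g b * Y b m)"
    unfolding cf_def ..
  also have "\<dots> = (\<Sum>b\<in>R. (\<Sum>a\<in>R. cf g a * (lam i b * lam a b)) * Y b m)"
  proof (rule sum.cong)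
    fix b assume b: "b \<in> R"
    have "pmult (row_vec r lam i) g b = lam i b * (\<Sum>a\<in>R. cf g a * lam a b)"
      using recon[OF g b] rv[OF b] by (simp add: pmult_def)
    also have "\<dots> = (\<Sum>a\<in>R. cf g a * (lam i b * lam a b))" by (simp add: sum_distrib_left mult_ac)
    finally show "pmult (row_vec r lam i) g b * Y b m = (\<Sum>a\<in>R. cf g a * (lam i b * lam a b)) * Y b m" by simp
  qed simp
  also have "\<dots> = (\<Sum>b\<in>R. (\<Sum>a\<in>R. cf g a * (\<Sum>l\<in>R. of_nat (N i a l) * lam l b)) * Y b m)"
  proof (rule sum.cong)
    fix b assume b: "b \<in> R"
    have "(\<Sum>a\<in>R. cf g a * (lam i b * lam a b)) = (\<Sum>a\<in>R. cf g a * (\<Sum>l\<in>R. of_nat (N i a l) * lam l b))"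
      by (rule sum.cong) (use prodN[OF i _ b] in auto)
    then show "(\<Sum>a\<in>R. cf g a * (lam i b * lam a b)) * Y b m = (\<Sum>a\<in>R. cf g a * (\<Sum>l\<in>R. of_nat (N i a l) * lam l b)) * Y b m"
      by simp
  qed simp
  also have "\<dots> = (\<Sum>b\<in>R. \<Sum>a\<in>R. \<Sum>l\<in>R. cf g a * of_nat (N i a l) * (lam l b * Y b m))"
    by (simp add: sum_distrib_left sum_distrib_right mult_ac)
  also have "\<dots> = (\<Sum>a\<in>R. \<Sum>b\<in>R. \<Sum>l\<in>R. cf g a * of_nat (N i a l) * (lam l b * Y b m))"
    by (rule sum.swap)
  also have "\<dots> = (\<Sum>a\<in>R. \<Sum>l\<in>R. \<Sum>b\<in>R. cf g a * of_nat (N i a l) * (lam l b * Y b m))"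
    by (rule sum.cong[OF refl], rule sum.swap)
  also have "\<dots> = (\<Sum>a\<in>R. \<Sum>l\<in>R. cf g a * of_nat (N i a l) * (\<Sum>b\<in>R. lam l b * Y b m))"
    by (simp add: sum_distrib_left)
  also have "\<dots> = (\<Sum>a\<in>R. \<Sum>l\<in>R. cf g a * of_nat (N i a l) * (if l = m then 1 else 0))"
    using LY m by (intro sum.cong refl) simp
  also have "\<dots> = (\<Sum>a\<in>R. cf g a * of_nat (N i a m))"
    using m by (intro sum.cong refl) (rule sdelta2, auto)
  finally show ?thesis .
qed

lemma ipb_adj: "i \<in> R \<Longrightarrow> g \<in> Vsp r \<Longrightarrow> h \<in> Vsp r \<Longrightarrow>
   ipb (pmult (row_vec r lam i) g) h = ipb g (pmult (row_vec r lam (d i)) h)"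
proof -
  assume i: "i \<in> R" and g: "g \<in> Vsp r" and h: "h \<in> Vsp r"
  have "ipb (pmult (row_vec r lam i) g) h = (\<Sum>m\<in>R. (\<Sum>a\<in>R. cf g a * of_nat (N i a m)) * cnj (cf h m))"
    unfolding ipb_def using cf_mult[OF i g] by simp
  also have "\<dots> = (\<Sum>m\<in>R. \<Sum>a\<in>R. cf g a * of_nat (N i a m) * cnj (cf h m))"
    by (simp add: sum_distrib_right)
  also have "\<dots> = (\<Sum>a\<in>R. \<Sum>m\<in>R. cf g a * of_nat (N i a m) * cnj (cf h m))" by (rule sum.swap)
  also have "\<dots> = (\<Sum>a\<in>R. \<Sum>m\<in>R. cf g a * (cnj (cf h m) * of_nat (N (d i) m a)))"
    using frob1[OF i] by (intro sum.cong refl) (simp add: mult_ac)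
  also have "\<dots> = (\<Sum>a\<in>R. cf g a * cnj (\<Sum>m\<in>R. cf h m * of_nat (N (d i) m a)))"
    by (simp add: sum_distrib_left)
  also have "\<dots> = ipb g (pmult (row_vec r lam (d i)) h)"
    unfolding ipb_def using cf_mult[OF d_in[OF i] h] by simp
  finally show ?thesis .
qed

lemma ipb_is: "is_inner_product r ipb"
  unfolding is_inner_product_def
proof (intro conjI ballI allI impI)
  fix f g h :: "nat \<Rightarrow> complex"
  have "cf (\<lambda>j. f j + g j) m = cf f m + cf g m" for m by (simp add: cf_def distrib_right sum.distrib)
  then show "ipb (\<lambda>j. f j + g j) h = ipb f h + ipb g h"
    by (simp add: ipb_def distrib_right sum.distrib)
next
  fix c and f g :: "nat \<Rightarrow> complex"
  have "cf (\<lambda>j. c * f j) m = c * cf f m" for m by (simp add: cf_def sum_distrib_left mult.assoc)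
  then show "ipb (\<lambda>j. c * f j) g = c * ipb f g"
    by (simp add: ipb_def sum_distrib_left mult.assoc)
next
  fix f g :: "nat \<Rightarrow> complex"
  show "ipb g f = cnj (ipb f g)" by (simp add: ipb_def mult.commute)
next
  fix f :: "nat \<Rightarrow> complex" assume f: "f \<in> Vsp r" and nz: "f \<noteq> (\<lambda>_. 0)"
  obtain x where x: "f x \<noteq> 0" using nz by auto
  then have xR: "x \<in> R" using f by (auto simp: Vsp_def)
  have "\<exists>a\<in>R. cf f a \<noteq> 0"
  proof (rule ccontr)
    assume "\<not> ?thesis"
    then have "(\<Sum>a\<in>R. cf f a * lam a x) = 0" by simp
    then show False using recon[OF f xR] x by simp
  qed
  then obtain a where a: "a \<in> R" "cf f a \<noteq> 0" by blast
  have e: "cf f m * cnj (cf f m) = complex_of_real ((Re (cf f m))\<^sup>2 + (Im (cf f m))\<^sup>2)" for m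
    by (rule complex_mult_cnj)
  have "Im (ipb f f) = 0" unfolding ipb_def e by (simp add: Im_sum)
  moreover have "Re (ipb f f) = (\<Sum>m\<in>R. (Re (cf f m))\<^sup>2 + (Im (cf f m))\<^sup>2)"
    unfolding ipb_def e by simp
  moreover have "(\<Sum>m\<in>R. (Re (cf f m))\<^sup>2 + (Im (cf f m))\<^sup>2) > 0"
  proof (rule sum_pos2[OF _ a(1)])
    show "0 < (Re (cf f a))\<^sup>2 + (Im (cf f a))\<^sup>2" using a(2) complex_eq_iff sum_power2_gt_zero_iff by auto
  qed auto
  ultimately show "Im (ipb f f) = 0" "Re (ipb f f) > 0" by simp_all
qed

lemma bwd_main: "\<exists>ip. is_inner_product r ip \<and> eigen_conditions r lam ip"
proof (intro exI[of _ ipb] conjI)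
  show "is_inner_product r ipb" by (rule ipb_is)
  show "eigen_conditions r lam ipb"
    unfolding eigen_conditions_def
  proof (intro conjI ballI)
    fix i j assume i: "i \<in> R" and j: "j \<in> R"
    have "ipb (row_vec r lam i) (row_vec r lam j) = (\<Sum>m\<in>R. (if i = m then 1 else 0) * cnj (if j = m then 1 else 0))"
      unfolding ipb_def using cf_row i j by simp
    also have "\<dots> = (if i = j then 1 else 0)" using sdelta1[of R i "\<lambda>m. cnj (if j = m then 1 else 0)"] i by simp
    finally show "ipb (row_vec r lam i) (row_vec r lam j) = (if i = j then 1 else 0)" .
  next
    fix i assume i: "i \<in> R"
    show "\<exists>j\<in>R. adjoint_mult r ipb (row_vec r lam i) (row_vec r lam j)"
      using ipb_adj[OF i] d_in[OF i] unfolding adjoint_mult_def by blast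
  next
    fix g :: "nat \<Rightarrow> complex" assume g: "g \<in> Vsp r"
    show "pmult (row_vec r lam 1) g = g"
    proof
      fix x show "pmult (row_vec r lam 1) g x = g x"
      proof (cases "x \<in> R")
        case True
        then have "lam 1 x = 1" using lam_eq[OF one_in True] d1 P1nz[OF True] by simp
        then show ?thesis using True by (simp add: pmult_def rv)
      next
        case False then show ?thesis using g by (simp add: pmult_def Vsp_def)
      qed
    qed
  next
    fix i j k assume i: "i \<in> R" and j: "j \<in> R" and k: "k \<in> R"
    have "ipb (pmult (row_vec r lam i) (row_vec r lam j)) (row_vec r lam k)
        = (\<Sum>m\<in>R. (\<Sum>a\<in>R. (if j = a then 1 else 0) * of_nat (N i a m)) * cnj (if k = m then 1 else 0))"
      unfolding ipb_def using cf_mult[OF i row_in] cf_row j k by simp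
    also have "\<dots> = (\<Sum>m\<in>R. of_nat (N i j m) * (if k = m then 1 else 0))"
    proof (rule sum.cong)
      fix m assume "m \<in> R"
      have "(\<Sum>a\<in>R. (if j = a then 1 else 0) * of_nat (N i a m)) = (of_nat (N i j m) :: complex)"
        by (rule sdelta1) (use j in auto)
      then show "(\<Sum>a\<in>R. (if j = a then 1 else 0) * of_nat (N i a m)) * cnj (if k = m then 1 else 0)
          = of_nat (N i j m) * (if k = m then 1 else 0)" by simp
    qed simp
    also have "\<dots> = of_nat (N i j k)" using sdelta3[of R k] k by simp
    finally show "\<exists>n::nat. ipb (pmult (row_vec r lam i) (row_vec r lam j)) (row_vec r lam k) = of_nat n" by blast
  qed
qed

end


theorem theorem2p2:
  fixes r :: nat
  assumes "r \<ge> 1"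
  shows
   "(\<forall>(lam :: nat \<Rightarrow> nat \<Rightarrow> complex) ip.
       is_inner_product r ip \<and> eigen_conditions r lam ip \<longrightarrow>
       (\<exists>(N :: nat \<Rightarrow> nat \<Rightarrow> nat \<Rightarrow> nat) d.
          (\<forall>i\<in>{1..r}. \<forall>j\<in>{1..r}. \<forall>k\<in>{1..r}.
             of_nat (N i j k) = ip (pmult (row_vec r lam i) (row_vec r lam j)) (row_vec r lam k)) \<and>
          comm_fusion_ring r N d \<and>
          (\<forall>i\<in>{1..r}. adjoint_mult r ip (row_vec r lam i) (row_vec r lam (d i))) \<and>
          eigentable r N lam))
    \<and>
    (\<forall>(N :: nat \<Rightarrow> nat \<Rightarrow> nat \<Rightarrow> nat) d (lam :: nat \<Rightarrow> nat \<Rightarrow> complex).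
       comm_fusion_ring r N d \<and> eigentable r N lam \<longrightarrow>
       (\<exists>ip. is_inner_product r ip \<and> eigen_conditions r lam ip))"
proof (intro conjI allI impI)
  fix lam :: "nat \<Rightarrow> nat \<Rightarrow> complex" and ip
  assume "is_inner_product r ip \<and> eigen_conditions r lam ip"
  then show "\<exists>(N :: nat \<Rightarrow> nat \<Rightarrow> nat \<Rightarrow> nat) d.
          (\<forall>i\<in>{1..r}. \<forall>j\<in>{1..r}. \<forall>k\<in>{1..r}.
             of_nat (N i j k) = ip (pmult (row_vec r lam i) (row_vec r lam j)) (row_vec r lam k)) \<and>
          comm_fusion_ring r N d \<and>
          (\<forall>i\<in>{1..r}. adjoint_mult r ip (row_vec r lam i) (row_vec r lam (d i))) \<and>
          eigentable r N lam"
    using fwd_main[of r ip lam] assms by blast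
next
  fix N :: "nat \<Rightarrow> nat \<Rightarrow> nat \<Rightarrow> nat" and d and lam :: "nat \<Rightarrow> nat \<Rightarrow> complex"
  assume a: "comm_fusion_ring r N d \<and> eigentable r N lam"
  then obtain P Q where
    "\<forall>k\<in>{1..r}. \<forall>m\<in>{1..r}. (\<Sum>l\<in>{1..r}. P k l * Q l m) = (if k = m then 1 else 0)"
    "\<forall>k\<in>{1..r}. \<forall>m\<in>{1..r}. (\<Sum>l\<in>{1..r}. Q k l * P l m) = (if k = m then 1 else 0)"
    "\<forall>i\<in>{1..r}. \<forall>j\<in>{1..r}. \<forall>k\<in>{1..r}.
           (\<Sum>l\<in>{1..r}. of_nat (N i l k) * P l j) = lam i j * P k j"
    unfolding eigentable_def by blast
  then show "\<exists>ip. is_inner_product r ip \<and> eigen_conditions r lam ip"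
    using bwd_main[of r N d P Q lam] a by blast
qed

end
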